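(* Let $\xi$ be an American option and $(y,\chi)\in\Phi^{\mathrm{bg}}(\xi)$. Then for all $t=0,\ldots,T$, \[ y_t\in\chi^\ast_t\mathcal{Z}^{\mathrm{bd}}_t\ \text{ on }\{\chi^\ast_t>0\},\qquad y_t\in\mathcal{Q}_t\ \text{ on }\{\chi^\ast_t=0\}, \] that is, for each $\mu\in\Omega_t$: if $\chi^\ast_t(\mu)>0$ then $y_t(\mu)\in\chi^\ast_t(\mu)\mathcal{Z}^{\mathrm{bd}\mu}_t$, and if $\chi^\ast_t(\mu)=0$ then $y_t(\mu)\in\mathcal{Q}^\mu_t$.
   Context: Finite filtered probability space $(\Omega,\mathcal{F},\mathbb{P};(\mathcal{F}_t)_{t=0}^T)$, $\mathcal{F}_0$ trivial, $\mathcal{F}_T=2^\Omega$, $\mathbb{P}(\{\omega\})>0$. $\Omega_t$: atoms (nodes) of $\mathcal{F}_t$; $\mathrm{succ}\,\mu=\{\nu\in\Omega_{t+1}:\nu\subseteq\mu\}$. $\mathcal{L}_t$: $\mathcal{F}_t$-measurable $\mathbb{R}^d$-valued random variables (functions on $\Omega_t$). $d$ assets, $\mathcal{F}_t$-measurable exchange rates $\pi^{jk}_t>0$, $\pi^{jj}_t=1$. $\mathcal{K}^\mu_t$: convex cone generated by $e^1,\ldots,e^d$ and $\pi^{jk}_t(\mu)e^j-e^k$; $\mathcal{K}_t=\{x\in\mathcal{L}_t:x(\mu)\in\mathcal{K}^\mu_t\ \forall\mu\}$. Deferred solvency cone $\mathcal{Q}_t$: $z\in\mathcal{L}_t$ for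 which there exist $y_{t+1},\ldots,y_{T+1}$, $y_s\in\mathcal{L}_{s-1}$, $y_{T+1}=0$, with $z-y_{t+1}\in\mathcal{K}_t$, $y_s-y_{s+1}\in\mathcal{K}_s$ ($s>t$); $\mathcal{Q}^\mu_t=\{z(\mu):z\in\mathcal{Q}_t\}$. Trading strategies $\Phi$: $y=(y_t)_{t=0}^{T+1}$, $y_0\in\mathbb{R}^d$, $y_t\in\mathcal{L}_{t-1}$, $y_{T+1}=0$. Mixed stopping times $\mathcal{X}$: adapted $[0,1]$-valued $\chi$ with $\sum_{t=0}^T\chi_t=1$; $\chi^\ast_t=\sum_{s=t}^T\chi_s$. American option: adapted $\mathbb{R}^d$-valued $\xi$. $\Phi^{\mathrm{bg}}(\xi)$: pairs $(y,\chi)\in\Phi\times\mathcal{X}$ with $y_t+\chi_t\xi_t-y_{t+1}\in\mathcal{K}_t$ for each $t=0,\ldots,T$. Construction (nodewise): $\mathcal{U}^{\mathrm{bd}\mu}_t=-\xi_t(\mu)+\mathcal{Q}^\mu_t$; at $T$: $\mathcal{Z}^{\mathrm{bd}\mu}_T=\mathcal{V}^{\mathrm{bd}\mu}_T=\mathcal{W}^{\mathrm{bd}\mu}_T=\mathcal{U}^{\mathrm{bd}\mu}_T$; for $t<T$: $\mathcal{W}^{\mathrm{bd}\mu}_t=\bigcap_{\nu\in\mathrm{succ}\,\mu}\mathcal{Z}^{\mathrm{bd}\nu}_{t+1}$, $\mathcal{V}^{\mathrm{bd}\mu}_t=\mathcal{W}^{\mathrm{bd}\mu}_t+\mathcal{Q}^\mu_t$,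 $\mathcal{Z}^{\mathrm{bd}\mu}_t=\mathrm{conv}\{\mathcal{U}^{\mathrm{bd}\mu}_t,\mathcal{V}^{\mathrm{bd}\mu}_t\}$. Standing assumption: no arbitrage (no $y\in\Phi$ with $y_0=0$, $y_t-y_{t+1}\in\mathcal{K}_t$ for $t<T$ and $y_T-x\in\mathcal{K}_T$ for a nonzero componentwise non-negative $x\in\mathcal{L}_T$). *)

theory Defs
  imports "HOL-Analysis.Analysis"
begin

text \<open>Finite sample space: a finite type 'w. The filtration is given by its atoms:
  atoms t is the partition of the sample space into the atoms (nodes) of F_t.\<close>

definition is_partition :: "'w set set \<Rightarrow> bool" where
  "is_partition A \<longleftrightarrow> {} \<notin> A \<and> \<Union>A = UNIV \<and>
     (\<forall>a\<in>A. \<forall>b\<in>A. a \<noteq> b \<longrightarrow> a \<inter> b = {})"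

definition filtration :: "nat \<Rightarrow> (nat \<Rightarrow> 'w set set) \<Rightarrow> bool" where
  "filtration T atoms \<longleftrightarrow>
     (\<forall>t\<le>T. is_partition (atoms t)) \<and>
     atoms 0 = {UNIV} \<and>
     atoms T = (\<lambda>w. {w}) ` UNIV \<and>
     (\<forall>t<T. \<forall>\<nu>\<in>atoms (Suc t). \<exists>\<mu>\<in>atoms t. \<nu> \<subseteq> \<mu>)"

definition adapted :: "(nat \<Rightarrow> 'w set set) \<Rightarrow> nat \<Rightarrow> ('w \<Rightarrow> 'a) \<Rightarrow> bool" where
  "adapted atoms t X \<longleftrightarrow> (\<forall>\<mu>\<in>atoms t. \<forall>w\<in>\<mu>. \<forall>w'\<in>\<mu>. X w = X w')"

definition succ_nodes :: "(nat \<Rightarrow> 'w set set) \<Rightarrow> nat \<Rightarrow> 'w set \<Rightarrow> 'w set set" where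
  "succ_nodes atoms t \<mu> = {\<nu> \<in> atoms (Suc t). \<nu> \<subseteq> \<mu>}"

text \<open>Value of an F_t-measurable random variable at a node (any representative).\<close>
definition at_node :: "('w \<Rightarrow> 'a) \<Rightarrow> 'w set \<Rightarrow> 'a" where
  "at_node X \<mu> = X (SOME w. w \<in> \<mu>)"

definition exchange_rates ::
  "nat \<Rightarrow> (nat \<Rightarrow> 'w set set) \<Rightarrow> (nat \<Rightarrow> 'w \<Rightarrow> 'd \<Rightarrow> 'd \<Rightarrow> real) \<Rightarrow> bool" where
  "exchange_rates T atoms rate \<longleftrightarrow>
     (\<forall>t\<le>T. adapted atoms t (rate t) \<and>
        (\<forall>w j k. rate t w j k > 0) \<and> (\<forall>w j. rate t w j j = 1))"

definition Kcone :: "(nat \<Rightarrow> 'w \<Rightarrow> 'd::finite \<Rightarrow> 'd \<Rightarrow> real) \<Rightarrow> nat \<Rightarrow> 'w \<Rightarrow> (real^'d) set" where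
  "Kcone rate t w = convex_cone hull
     ({axis j 1 | j. True} \<union> {rate t w j k *\<^sub>R axis j 1 - axis k 1 | j k. True})"

text \<open>x in K_t (x assumed in L_t where relevant).\<close>
definition inK :: "(nat \<Rightarrow> 'w \<Rightarrow> 'd::finite \<Rightarrow> 'd \<Rightarrow> real) \<Rightarrow> nat \<Rightarrow> ('w \<Rightarrow> real^'d) \<Rightarrow> bool" where
  "inK rate t x \<longleftrightarrow> (\<forall>w. x w \<in> Kcone rate t w)"

definition inQ :: "nat \<Rightarrow> (nat \<Rightarrow> 'w set set) \<Rightarrow> (nat \<Rightarrow> 'w \<Rightarrow> 'd::finite \<Rightarrow> 'd \<Rightarrow> real)
    \<Rightarrow> nat \<Rightarrow> ('w \<Rightarrow> real^'d) \<Rightarrow> bool" where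
  "inQ T atoms rate t z \<longleftrightarrow> adapted atoms t z \<and>
     (\<exists>y :: nat \<Rightarrow> 'w \<Rightarrow> real^'d.
        (\<forall>s\<in>{Suc t..Suc T}. adapted atoms (s - 1) (y s)) \<and>
        y (Suc T) = (\<lambda>_. 0) \<and>
        inK rate t (\<lambda>w. z w - y (Suc t) w) \<and>
        (\<forall>s\<in>{Suc t..T}. inK rate s (\<lambda>w. y s w - y (Suc s) w)))"

definition Qnode :: "nat \<Rightarrow> (nat \<Rightarrow> 'w set set) \<Rightarrow> (nat \<Rightarrow> 'w \<Rightarrow> 'd::finite \<Rightarrow> 'd \<Rightarrow> real)
    \<Rightarrow> nat \<Rightarrow> 'w set \<Rightarrow> (real^'d) set" where
  "Qnode T atoms rate t \<mu> = {at_node z \<mu> | z. inQ T atoms rate t z}"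

definition trading_strategy :: "nat \<Rightarrow> (nat \<Rightarrow> 'w set set) \<Rightarrow> (nat \<Rightarrow> 'w \<Rightarrow> real^'d::finite) \<Rightarrow> bool" where
  "trading_strategy T atoms y \<longleftrightarrow>
     (\<exists>c. y 0 = (\<lambda>_. c)) \<and>
     (\<forall>t\<in>{1..T}. adapted atoms (t - 1) (y t)) \<and>
     y (Suc T) = (\<lambda>_. 0)"

definition no_arbitrage :: "nat \<Rightarrow> (nat \<Rightarrow> 'w set set) \<Rightarrow> (nat \<Rightarrow> 'w \<Rightarrow> 'd::finite \<Rightarrow> 'd \<Rightarrow> real) \<Rightarrow> bool" where
  "no_arbitrage T atoms rate \<longleftrightarrow>
     \<not> (\<exists>y x. trading_strategy T atoms y \<and> y 0 = (\<lambda>_. 0) \<and>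
          (\<forall>t<T. inK rate t (\<lambda>w. y t w - y (Suc t) w)) \<and>
          adapted atoms T x \<and> (\<forall>w i. x w $ i \<ge> 0) \<and> x \<noteq> (\<lambda>_. 0) \<and>
          inK rate T (\<lambda>w. y T w - x w))"

definition mixed_stopping_time :: "nat \<Rightarrow> (nat \<Rightarrow> 'w set set) \<Rightarrow> (nat \<Rightarrow> 'w \<Rightarrow> real) \<Rightarrow> bool" where
  "mixed_stopping_time T atoms ch \<longleftrightarrow>
     (\<forall>t\<le>T. adapted atoms t (ch t) \<and> (\<forall>w. 0 \<le> ch t w \<and> ch t w \<le> 1)) \<and>
     (\<forall>w. (\<Sum>t\<le>T. ch t w) = 1)"

definition chi_star :: "nat \<Rightarrow> (nat \<Rightarrow> 'w \<Rightarrow> real) \<Rightarrow> nat \<Rightarrow> 'w \<Rightarrow> real" where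
  "chi_star T ch t w = (\<Sum>s\<in>{t..T}. ch s w)"

definition american_option :: "nat \<Rightarrow> (nat \<Rightarrow> 'w set set) \<Rightarrow> (nat \<Rightarrow> 'w \<Rightarrow> real^'d::finite) \<Rightarrow> bool" where
  "american_option T atoms \<xi> \<longleftrightarrow> (\<forall>t\<le>T. adapted atoms t (\<xi> t))"

definition Phi_bg :: "nat \<Rightarrow> (nat \<Rightarrow> 'w set set) \<Rightarrow> (nat \<Rightarrow> 'w \<Rightarrow> 'd::finite \<Rightarrow> 'd \<Rightarrow> real)
    \<Rightarrow> (nat \<Rightarrow> 'w \<Rightarrow> real^'d) \<Rightarrow> (nat \<Rightarrow> 'w \<Rightarrow> real^'d) \<Rightarrow> (nat \<Rightarrow> 'w \<Rightarrow> real) \<Rightarrow> bool" where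
  "Phi_bg T atoms rate \<xi> y ch \<longleftrightarrow>
     trading_strategy T atoms y \<and> mixed_stopping_time T atoms ch \<and>
     (\<forall>t\<le>T. inK rate t (\<lambda>w. y t w + ch t w *\<^sub>R \<xi> t w - y (Suc t) w))"

definition Ubd :: "nat \<Rightarrow> (nat \<Rightarrow> 'w set set) \<Rightarrow> (nat \<Rightarrow> 'w \<Rightarrow> 'd::finite \<Rightarrow> 'd \<Rightarrow> real)
    \<Rightarrow> (nat \<Rightarrow> 'w \<Rightarrow> real^'d) \<Rightarrow> nat \<Rightarrow> 'w set \<Rightarrow> (real^'d) set" where
  "Ubd T atoms rate \<xi> t \<mu> = (\<lambda>q. - at_node (\<xi> t) \<mu> + q) ` Qnode T atoms rate t \<mu>"

text \<open>Zrec n t mu is Z^{bd mu}_t when n = T - t (backward recursion with n steps to go).\<close>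
primrec Zrec :: "nat \<Rightarrow> (nat \<Rightarrow> 'w set set) \<Rightarrow> (nat \<Rightarrow> 'w \<Rightarrow> 'd::finite \<Rightarrow> 'd \<Rightarrow> real)
    \<Rightarrow> (nat \<Rightarrow> 'w \<Rightarrow> real^'d) \<Rightarrow> nat \<Rightarrow> nat \<Rightarrow> 'w set \<Rightarrow> (real^'d) set" where
  "Zrec T atoms rate \<xi> 0 t \<mu> = Ubd T atoms rate \<xi> t \<mu>"
| "Zrec T atoms rate \<xi> (Suc n) t \<mu> =
     (let W = (\<Inter>\<nu>\<in>succ_nodes atoms t \<mu>. Zrec T atoms rate \<xi> n (Suc t) \<nu>);
          V = {a + b | a b. a \<in> W \<and> b \<in> Qnode T atoms rate t \<mu>}
      in convex hull (Ubd T atoms rate \<xi> t \<mu> \<union> V))"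

definition Zbd :: "nat \<Rightarrow> (nat \<Rightarrow> 'w set set) \<Rightarrow> (nat \<Rightarrow> 'w \<Rightarrow> 'd::finite \<Rightarrow> 'd \<Rightarrow> real)
    \<Rightarrow> (nat \<Rightarrow> 'w \<Rightarrow> real^'d) \<Rightarrow> nat \<Rightarrow> 'w set \<Rightarrow> (real^'d) set" where
  "Zbd T atoms rate \<xi> t \<mu> = Zrec T atoms rate \<xi> (T - t) t \<mu>"

end

theory Submission
  imports Defs
begin

lemma K0: "0 \<in> Kcone rate t w"
  unfolding Kcone_def by (rule convex_cone_hull_contains_0)

lemma Kscale: "k \<in> Kcone rate t w \<Longrightarrow> 0 \<le> a \<Longrightarrow> a *\<^sub>R k \<in> Kcone rate t w"
  unfolding Kcone_def by (rule convex_cone_scaleR[OF convex_cone_convex_cone_hull])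

lemma inQ_scale:
  assumes "inQ T atoms rate t z" "0 \<le> a"
  shows "inQ T atoms rate t (\<lambda>w. a *\<^sub>R z w)"
proof -
  from assms(1) obtain y where y:
    "\<forall>s\<in>{Suc t..Suc T}. adapted atoms (s - 1) (y s)" "y (Suc T) = (\<lambda>_. 0)"
    "inK rate t (\<lambda>w. z w - y (Suc t) w)"
    "\<forall>s\<in>{Suc t..T}. inK rate s (\<lambda>w. y s w - y (Suc s) w)"
    and az: "adapted atoms t z"
    unfolding inQ_def by blast
  show ?thesis unfolding inQ_def
  proof (intro conjI exI[of _ "\<lambda>s w. a *\<^sub>R y s w"])
    show "adapted atoms t (\<lambda>w. a *\<^sub>R z w)" using az unfolding adapted_def by metis
    show "\<forall>s\<in>{Suc t..Suc T}. adapted atoms (s - 1) (\<lambda>w. a *\<^sub>R y s w)"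
      using y(1) unfolding adapted_def by metis
    show "(\<lambda>w. a *\<^sub>R y (Suc T) w) = (\<lambda>_. 0)" using y(2) by simp
    show "inK rate t (\<lambda>w. a *\<^sub>R z w - a *\<^sub>R y (Suc t) w)"
      using y(3) assms(2) unfolding inK_def
      by (metis Kscale scaleR_right_diff_distrib)
    show "\<forall>s\<in>{Suc t..T}. inK rate s (\<lambda>w. a *\<^sub>R y s w - a *\<^sub>R y (Suc s) w)"
      using y(4) assms(2) unfolding inK_def
      by (metis Kscale scaleR_right_diff_distrib)
  qed
qed

lemma Qnode_scale:
  assumes "q \<in> Qnode T atoms rate t \<mu>" "0 \<le> a"
  shows "a *\<^sub>R q \<in> Qnode T atoms rate t \<mu>"
proof -
  from assms(1) obtain z where "inQ T atoms rate t z" "q = at_node z \<mu>"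
    unfolding Qnode_def by blast
  moreover have "at_node (\<lambda>w. a *\<^sub>R z w) \<mu> = a *\<^sub>R at_node z \<mu>"
    by (simp add: at_node_def)
  moreover have "inQ T atoms rate t (\<lambda>w. a *\<^sub>R z w)" using inQ_scale[OF _ assms(2)] \<open>inQ T atoms rate t z\<close> .
  ultimately show ?thesis unfolding Qnode_def by (metis (mono_tags, lifting) mem_Collect_eq)
qed

context
  fixes T :: nat and atoms :: "nat \<Rightarrow> ('w::finite) set set"
    and rate :: "nat \<Rightarrow> 'w \<Rightarrow> 'd::finite \<Rightarrow> 'd \<Rightarrow> real"
  assumes filt: "filtration T atoms" and er: "exchange_rates T atoms rate"
begin

lemma part: "t \<le> T \<Longrightarrow> is_partition (atoms t)"
  using filt unfolding filtration_def by simp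

lemma atom_ne: "t \<le> T \<Longrightarrow> \<mu> \<in> atoms t \<Longrightarrow> \<mu> \<noteq> {}"
proof -
  assume "t \<le> T" "\<mu> \<in> atoms t"
  moreover have "{} \<notin> atoms t" using part[OF \<open>t \<le> T\<close>] unfolding is_partition_def by simp
  ultimately show ?thesis by auto
qed

lemma atom_disj: "t \<le> T \<Longrightarrow> \<mu> \<in> atoms t \<Longrightarrow> \<mu>' \<in> atoms t \<Longrightarrow> w \<in> \<mu> \<Longrightarrow> w \<in> \<mu>' \<Longrightarrow> \<mu> = \<mu>'"
proof (rule ccontr)
  assume a: "t \<le> T" "\<mu> \<in> atoms t" "\<mu>' \<in> atoms t" "w \<in> \<mu>" "w \<in> \<mu>'" "\<mu> \<noteq> \<mu>'"
  have "\<forall>a\<in>atoms t. \<forall>b\<in>atoms t. a \<noteq> b \<longrightarrow> a \<inter> b = {}"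
    using part[OF a(1)] unfolding is_partition_def by simp
  then have "\<mu> \<inter> \<mu>' = {}" using a(2,3,6) by simp
  then show False using a(4,5) by auto
qed

lemma atom_ex: "t \<le> T \<Longrightarrow> \<exists>\<mu>\<in>atoms t. w \<in> \<mu>"
proof -
  assume "t \<le> T"
  then have "\<Union>(atoms t) = UNIV" using part unfolding is_partition_def by simp
  then have "w \<in> \<Union>(atoms t)" by simp
  then show ?thesis by simp
qed

lemma refine: "s \<le> t \<Longrightarrow> t \<le> T \<Longrightarrow> \<alpha> \<in> atoms t \<Longrightarrow> \<exists>\<beta>\<in>atoms s. \<alpha> \<subseteq> \<beta>"
proof (induction t arbitrary: \<alpha>)
  case 0 then show ?case by auto
next
  case (Suc t)
  show ?case
  proof (cases "s = Suc t")
    case True then show ?thesis using Suc by auto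
  next
    case False
    then have "s \<le> t" using Suc by auto
    have tT: "t < T" using Suc.prems by simp
    have "\<forall>\<nu>\<in>atoms (Suc t). \<exists>\<mu>\<in>atoms t. \<nu> \<subseteq> \<mu>"
      using filt tT unfolding filtration_def by blast
    then obtain \<beta>' where b: "\<beta>' \<in> atoms t" "\<alpha> \<subseteq> \<beta>'" using Suc.prems(3) by blast
    obtain \<beta> where "\<beta> \<in> atoms s" "\<beta>' \<subseteq> \<beta>"
      using Suc.IH[OF \<open>s \<le> t\<close> _ b(1)] tT by auto
    then show ?thesis using b(2) by blast
  qed
qed

lemma adapted_mono:
  assumes "s \<le> t" "t \<le> T" "adapted atoms s X" shows "adapted atoms t X"
  unfolding adapted_def
proof (intro ballI)
  fix \<alpha> w1 w2 assume h: "\<alpha> \<in> atoms t" "w1 \<in> \<alpha>" "w2 \<in> \<alpha>"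
  from refine[OF assms(1,2) h(1)] obtain \<beta> where "\<beta> \<in> atoms s" "\<alpha> \<subseteq> \<beta>" by blast
  then show "X w1 = X w2" using assms(3) h unfolding adapted_def by blast
qed

lemma at_node_eq:
  assumes "\<mu> \<in> atoms t" "adapted atoms t X" "w \<in> \<mu>" shows "at_node X \<mu> = X w"
proof -
  have "(SOME w. w \<in> \<mu>) \<in> \<mu>" using assms(3) by (rule someI)
  then show ?thesis using assms unfolding at_node_def adapted_def by blast
qed

lemma K_adapt: "t \<le> T \<Longrightarrow> \<mu> \<in> atoms t \<Longrightarrow> w \<in> \<mu> \<Longrightarrow> w' \<in> \<mu> \<Longrightarrow> Kcone rate t w = Kcone rate t w'"
proof -
  assume a: "t \<le> T" "\<mu> \<in> atoms t" "w \<in> \<mu>" "w' \<in> \<mu>"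
  have "adapted atoms t (rate t)" using er a(1) by (simp add: exchange_rates_def)
  then have "rate t w = rate t w'" using a(2,3,4) unfolding adapted_def by blast
  then show ?thesis unfolding Kcone_def by simp
qed

lemma indic_adapted:
  assumes "t \<le> T" "\<mu> \<in> atoms t"
  shows "adapted atoms t (\<lambda>w. if w \<in> \<mu> then a else b)"
  unfolding adapted_def
proof (intro ballI)
  fix \<alpha> w1 w2 assume h: "\<alpha> \<in> atoms t" "w1 \<in> \<alpha>" "w2 \<in> \<alpha>"
  have "w1 \<in> \<mu> \<longleftrightarrow> w2 \<in> \<mu>" using atom_disj[OF assms(1) assms(2) h(1)] h by blast
  then show "(if w1 \<in> \<mu> then a else b) = (if w2 \<in> \<mu> then a else b)" by simp
qed

lemma KQ:
  assumes "t \<le> T" "\<mu> \<in> atoms t" "w \<in> \<mu>" "k \<in> Kcone rate t w"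
  shows "k \<in> Qnode T atoms rate t \<mu>"
proof -
  define z where "z = (\<lambda>w'. if w' \<in> \<mu> then k else (0::real^'d))"
  have az: "adapted atoms t z" unfolding z_def by (rule indic_adapted[OF assms(1,2)])
  have "at_node z \<mu> = z w" by (rule at_node_eq[OF assms(2) az assms(3)])
  then have "at_node z \<mu> = k" using assms(3) unfolding z_def by simp
  moreover have "inQ T atoms rate t z"
    unfolding inQ_def
  proof (intro conjI exI[of _ "\<lambda>s w. 0"])
    show "adapted atoms t z" by (rule az)
    show "\<forall>s\<in>{Suc t..Suc T}. adapted atoms (s - 1) (\<lambda>w. 0::real^'d)"
      unfolding adapted_def by simp
    show "inK rate t (\<lambda>w. z w - 0)"
      unfolding inK_def z_def
    proof
      fix w' show "(if w' \<in> \<mu> then k else 0) - 0 \<in> Kcone rate t w'"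
      proof (cases "w' \<in> \<mu>")
        case True
        then have "Kcone rate t w = Kcone rate t w'" by (rule K_adapt[OF assms(1,2,3)])
        then show ?thesis using True assms(4) by simp
      qed (simp add: K0)
    qed
    show "\<forall>s\<in>{Suc t..T}. inK rate s (\<lambda>w. (0::real^'d) - 0)"
      unfolding inK_def by (simp add: K0)
  qed simp
  ultimately show ?thesis unfolding Qnode_def by blast
qed


lemma glue:
  assumes tT: "t < T" and mu: "\<mu> \<in> atoms t" and w: "w \<in> \<mu>"
    and xQ: "\<forall>\<nu>\<in>succ_nodes atoms t \<mu>. x \<in> Qnode T atoms rate (Suc t) \<nu>"
    and k: "k \<in> Kcone rate t w"
  shows "x + k \<in> Qnode T atoms rate t \<mu>"
proof -
  define P where "P = (\<lambda>\<nu> (Y :: nat \<Rightarrow> 'w \<Rightarrow> real^'d).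
     (\<forall>s\<in>{Suc (Suc t)..Suc T}. adapted atoms (s-1) (Y s)) \<and> Y (Suc T) = (\<lambda>_. 0) \<and>
     (\<forall>w\<in>\<nu>. x - Y (Suc (Suc t)) w \<in> Kcone rate (Suc t) w) \<and>
     (\<forall>s\<in>{Suc (Suc t)..T}. \<forall>w. Y s w - Y (Suc s) w \<in> Kcone rate s w))"
  have "\<forall>\<nu>\<in>succ_nodes atoms t \<mu>. \<exists>Y. P \<nu> Y"
  proof
    fix \<nu> assume nu: "\<nu> \<in> succ_nodes atoms t \<mu>"
    then have nuA: "\<nu> \<in> atoms (Suc t)" by (simp add: succ_nodes_def)
    from xQ nu obtain z where z: "inQ T atoms rate (Suc t) z" "x = at_node z \<nu>"
      unfolding Qnode_def by blast
    from z(1) obtain Y where Y: "\<forall>s\<in>{Suc (Suc t)..Suc T}. adapted atoms (s - 1) (Y s)"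
      "Y (Suc T) = (\<lambda>_. 0)" "inK rate (Suc t) (\<lambda>w. z w - Y (Suc (Suc t)) w)"
      "\<forall>s\<in>{Suc (Suc t)..T}. inK rate s (\<lambda>w. Y s w - Y (Suc s) w)"
      and az: "adapted atoms (Suc t) z" unfolding inQ_def by blast
    have zx: "\<forall>w\<in>\<nu>. z w = x" using at_node_eq[OF nuA az] z(2) by simp
    have "P \<nu> Y" unfolding P_def
    proof (intro conjI)
      show "\<forall>w\<in>\<nu>. x - Y (Suc (Suc t)) w \<in> Kcone rate (Suc t) w"
        using Y(3) zx unfolding inK_def by metis
      show "\<forall>s\<in>{Suc (Suc t)..T}. \<forall>w. Y s w - Y (Suc s) w \<in> Kcone rate s w"
        using Y(4) unfolding inK_def by blast
    qed (use Y in auto)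
    then show "\<exists>Y. P \<nu> Y" by blast
  qed
  then obtain Yf where Yf: "\<forall>\<nu>\<in>succ_nodes atoms t \<mu>. P \<nu> (Yf \<nu>)" by metis
  define nu where "nu = (\<lambda>w. SOME \<nu>. \<nu> \<in> atoms (Suc t) \<and> w \<in> \<nu>)"
  have nuS: "nu w' \<in> succ_nodes atoms t \<mu> \<and> w' \<in> nu w'" if "w' \<in> \<mu>" for w'
  proof -
    have "\<exists>\<nu>. \<nu> \<in> atoms (Suc t) \<and> w' \<in> \<nu>" using atom_ex[of "Suc t" w'] tT by auto
    then have h: "nu w' \<in> atoms (Suc t) \<and> w' \<in> nu w'" unfolding nu_def by (rule someI_ex)
    then obtain \<beta> where b: "\<beta> \<in> atoms t" "nu w' \<subseteq> \<beta>" using refine[of t "Suc t"] tT by auto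
    then have "\<beta> = \<mu>" using atom_disj[of t \<beta> \<mu> w'] h that mu tT by auto
    then show ?thesis using h b by (simp add: succ_nodes_def)
  qed
  have nu_uniq: "nu w' = \<nu>" if "w' \<in> \<mu>" "\<nu> \<in> atoms (Suc t)" "w' \<in> \<nu>" for w' \<nu>
    using nuS[OF that(1)] atom_disj[of "Suc t" "nu w'" \<nu> w'] that tT by (auto simp: succ_nodes_def)
  define Yg where "Yg = (\<lambda>s w'. if w' \<in> \<mu> then (if s = Suc t then x else Yf (nu w') s w') else (0::real^'d))"
  define z where "z = (\<lambda>w'. if w' \<in> \<mu> then x + k else (0::real^'d))"
  have tle: "t \<le> T" using tT by simp
  have az: "adapted atoms t z" unfolding z_def by (rule indic_adapted[OF tle mu])
  have "at_node z \<mu> = z w" by (rule at_node_eq[OF mu az w])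
  then have atz: "at_node z \<mu> = x + k" using w by (simp add: z_def)
  have "inQ T atoms rate t z"
    unfolding inQ_def
  proof (intro conjI exI[of _ Yg])
    show "adapted atoms t z" by (rule az)
    show "\<forall>s\<in>{Suc t..Suc T}. adapted atoms (s - 1) (Yg s)"
    proof
      fix s assume s: "s \<in> {Suc t..Suc T}"
      show "adapted atoms (s-1) (Yg s)"
      proof (cases "s = Suc t")
        case True
        have "Yg s = (\<lambda>w'. if w' \<in> \<mu> then x else 0)" using True unfolding Yg_def by (intro ext) simp
        then show ?thesis using indic_adapted[OF tle mu, of x 0] True by simp
      next
        case False
        then have s2: "s \<in> {Suc (Suc t)..Suc T}" using s by auto
        show ?thesis unfolding adapted_def
        proof (intro ballI)
          fix \<alpha> w1 w2 assume h: "\<alpha> \<in> atoms (s-1)" "w1 \<in> \<alpha>" "w2 \<in> \<alpha>"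
          have sT: "s - 1 \<le> T" using s by auto
          obtain \<nu>' where nu': "\<nu>' \<in> atoms (Suc t)" "\<alpha> \<subseteq> \<nu>'"
          proof -
            have "Suc t \<le> s - 1" using s2 by auto
            from refine[OF this sT h(1)] show ?thesis using that by blast
          qed
          show "Yg s w1 = Yg s w2"
          proof (cases "w1 \<in> \<mu> \<or> w2 \<in> \<mu>")
            case True
            then obtain w0 where w0: "w0 \<in> \<mu>" "w0 \<in> \<alpha>" using h by auto
            then have e: "nu w0 = \<nu>'" using nu_uniq nu' by auto
            then have nuS': "\<nu>' \<in> succ_nodes atoms t \<mu>" using nuS[OF w0(1)] by simp
            then have "\<nu>' \<subseteq> \<mu>" by (simp add: succ_nodes_def)
            then have m: "w1 \<in> \<mu>" "w2 \<in> \<mu>" using h nu' by auto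
            then have "nu w1 = \<nu>'" "nu w2 = \<nu>'" using nu_uniq h nu' by auto
            moreover have "adapted atoms (s-1) (Yf \<nu>' s)" using Yf nuS' s2 unfolding P_def by auto
            ultimately have "Yf \<nu>' s w1 = Yf \<nu>' s w2" "nu w1 = \<nu>'" "nu w2 = \<nu>'"
              using h unfolding adapted_def by blast+
            then show ?thesis using False m by (simp add: Yg_def)
          next
            case False then show ?thesis unfolding Yg_def by simp
          qed
        qed
      qed
    qed
    show "Yg (Suc T) = (\<lambda>_. 0)"
    proof
      fix w'
      show "Yg (Suc T) w' = 0"
      proof (cases "w' \<in> \<mu>")
        case True
        then have "P (nu w') (Yf (nu w'))" using Yf nuS by blast
        then have "Yf (nu w') (Suc T) = (\<lambda>_. 0)" unfolding P_def by blast
        then show ?thesis using True tT by (simp add: Yg_def)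
      qed (simp add: Yg_def)
    qed
    show "inK rate t (\<lambda>w. z w - Yg (Suc t) w)"
      unfolding inK_def
    proof
      fix w'
      show "z w' - Yg (Suc t) w' \<in> Kcone rate t w'"
      proof (cases "w' \<in> \<mu>")
        case True
        then have "Kcone rate t w = Kcone rate t w'" by (rule K_adapt[OF tle mu w])
        then show ?thesis using True k by (simp add: z_def Yg_def)
      qed (simp add: z_def Yg_def K0)
    qed
    show "\<forall>s\<in>{Suc t..T}. inK rate s (\<lambda>w. Yg s w - Yg (Suc s) w)"
      unfolding inK_def
    proof (intro ballI allI)
      fix s w' assume s: "s \<in> {Suc t..T}"
      show "Yg s w' - Yg (Suc s) w' \<in> Kcone rate s w'"
      proof (cases "w' \<in> \<mu>")
        case True
        then have PP: "P (nu w') (Yf (nu w'))" and wn: "w' \<in> nu w'" using Yf nuS by blast+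
        show ?thesis
        proof (cases "s = Suc t")
          case True
          then show ?thesis using PP wn \<open>w' \<in> \<mu>\<close> unfolding P_def Yg_def by simp
        next
          case False
          then have "s \<in> {Suc (Suc t)..T}" using s by auto
          then show ?thesis using PP \<open>w' \<in> \<mu>\<close> False unfolding P_def Yg_def by simp
        qed
      qed (simp add: Yg_def K0)
    qed
  qed
  then show ?thesis using atz unfolding Qnode_def by (metis (mono_tags, lifting) mem_Collect_eq)
qed


context
  fixes \<xi> y :: "nat \<Rightarrow> 'w \<Rightarrow> real^'d" and ch :: "nat \<Rightarrow> 'w \<Rightarrow> real"
  assumes phi: "Phi_bg T atoms rate \<xi> y ch" and am: "american_option T atoms \<xi>"
begin

lemma ts: "trading_strategy T atoms y" using phi by (simp add: Phi_bg_def)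
lemma mst: "mixed_stopping_time T atoms ch" using phi by (simp add: Phi_bg_def)

lemma Kt: "t \<le> T \<Longrightarrow> y t w + ch t w *\<^sub>R \<xi> t w - y (Suc t) w \<in> Kcone rate t w"
  using phi unfolding Phi_bg_def inK_def by blast

lemma yad: "t < T \<Longrightarrow> adapted atoms t (y (Suc t))"
proof -
  assume "t < T"
  then have "Suc t \<in> {1..T}" by simp
  then have "adapted atoms (Suc t - 1) (y (Suc t))" using ts unfolding trading_strategy_def by blast
  then show ?thesis by simp
qed

lemma yadT: "t \<le> T \<Longrightarrow> adapted atoms t (y t)"
proof (cases t)
  case 0
  obtain c where "y 0 = (\<lambda>_. c)" using ts unfolding trading_strategy_def by blast
  then show ?thesis using 0 by (simp add: adapted_def)
next
  case (Suc t')
  assume "t \<le> T"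
  then have "adapted atoms t' (y t)" using yad Suc by simp
  then show ?thesis using adapted_mono[of t' t] \<open>t \<le> T\<close> Suc by simp
qed

lemma chnn: "t \<le> T \<Longrightarrow> 0 \<le> ch t w" using mst unfolding mixed_stopping_time_def by blast

lemma chad: "t \<le> T \<Longrightarrow> adapted atoms t (ch t)" using mst unfolding mixed_stopping_time_def by blast

lemma xiad: "t \<le> T \<Longrightarrow> adapted atoms t (\<xi> t)" using am unfolding american_option_def by blast

lemma csplit: "t < T \<Longrightarrow> chi_star T ch t w = ch t w + chi_star T ch (Suc t) w"
  unfolding chi_star_def by (simp add: sum.atLeast_Suc_atMost)

lemma csnn: "0 \<le> chi_star T ch t w"
  unfolding chi_star_def by (rule sum_nonneg) (simp add: chnn)

lemma csad: "t < T \<Longrightarrow> adapted atoms t (chi_star T ch (Suc t))"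
proof -
  assume tT: "t < T"
  have eq: "chi_star T ch (Suc t) w = 1 - (\<Sum>s\<le>t. ch s w)" for w
  proof -
    have "{..T} = {..t} \<union> {Suc t..T}" using tT by auto
    moreover have "{..t} \<inter> {Suc t..T} = {}" by auto
    ultimately have "(\<Sum>s\<le>T. ch s w) = (\<Sum>s\<le>t. ch s w) + (\<Sum>s\<in>{Suc t..T}. ch s w)"
      by (simp add: sum.union_disjoint)
    moreover have "(\<Sum>s\<le>T. ch s w) = 1" using mst unfolding mixed_stopping_time_def by blast
    ultimately show ?thesis unfolding chi_star_def by simp
  qed
  show ?thesis unfolding adapted_def
  proof (intro ballI)
    fix \<alpha> w1 w2 assume h: "\<alpha> \<in> atoms t" "w1 \<in> \<alpha>" "w2 \<in> \<alpha>"
    have "ch s w1 = ch s w2" if "s \<in> {..t}" for s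
    proof -
      have "adapted atoms t (ch s)" using adapted_mono[of s t] chad[of s] that tT by simp
      then show ?thesis using h unfolding adapted_def by blast
    qed
    then have "(\<Sum>s\<le>t. ch s w1) = (\<Sum>s\<le>t. ch s w2)" by (rule sum.cong[OF refl])
    then show "chi_star T ch (Suc t) w1 = chi_star T ch (Suc t) w2" by (simp add: eq)
  qed
qed

lemma Ubd_eq: "t \<le> T \<Longrightarrow> \<mu> \<in> atoms t \<Longrightarrow> w \<in> \<mu> \<Longrightarrow>
   Ubd T atoms rate \<xi> t \<mu> = (\<lambda>q. - \<xi> t w + q) ` Qnode T atoms rate t \<mu>"
  unfolding Ubd_def using at_node_eq[OF _ xiad] by simp

definition good where
  "good t \<longleftrightarrow> (\<forall>\<mu>\<in>atoms t. \<forall>w\<in>\<mu>.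
           (chi_star T ch t w > 0 \<longrightarrow>
              y t w \<in> (\<lambda>z. chi_star T ch t w *\<^sub>R z) ` Zbd T atoms rate \<xi> t \<mu>) \<and>
           (chi_star T ch t w = 0 \<longrightarrow> y t w \<in> Qnode T atoms rate t \<mu>))"

lemma base: "good T"
  unfolding good_def
proof (intro ballI conjI impI)
  fix \<mu> w assume mu: "\<mu> \<in> atoms T" and w: "w \<in> \<mu>"
  define a where "a = ch T w"
  define k where "k = y T w + a *\<^sub>R \<xi> T w"
  have y0: "y (Suc T) = (\<lambda>_. 0)" using ts unfolding trading_strategy_def by blast
  have kK: "k \<in> Kcone rate T w" using Kt[of T w] y0 by (simp add: k_def a_def)
  have cs: "chi_star T ch T w = a" by (simp add: chi_star_def a_def)
  have Z: "Zbd T atoms rate \<xi> T \<mu> = (\<lambda>q. - \<xi> T w + q) ` Qnode T atoms rate T \<mu>"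
    by (simp add: Zbd_def Ubd_eq[OF le_refl mu w])
  {
    assume "chi_star T ch T w > 0"
    then have ap: "a > 0" using cs by simp
    have q: "inverse a *\<^sub>R k \<in> Qnode T atoms rate T \<mu>"
      using KQ[OF le_refl mu w Kscale[OF kK]] ap by simp
    have "y T w = a *\<^sub>R (- \<xi> T w + inverse a *\<^sub>R k)"
      using ap by (simp add: k_def algebra_simps)
    then show "y T w \<in> (\<lambda>z. chi_star T ch T w *\<^sub>R z) ` Zbd T atoms rate \<xi> T \<mu>"
      unfolding cs Z using q by blast
  next
    assume "chi_star T ch T w = 0"
    then have "y T w = k" using cs by (simp add: k_def)
    then show "y T w \<in> Qnode T atoms rate T \<mu>" using KQ[OF le_refl mu w kK] by simp
  }
qed

lemma step:
  assumes tT: "t < T" and IH: "good (Suc t)"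
  shows "good t"
  unfolding good_def
proof (intro ballI)
  fix \<mu> w assume mu: "\<mu> \<in> atoms t" and w: "w \<in> \<mu>"
  have tle: "t \<le> T" using tT by simp
  define a where "a = ch t w"
  define c where "c = chi_star T ch (Suc t) w"
  define x where "x = y (Suc t) w"
  define k where "k = y t w + a *\<^sub>R \<xi> t w - x"
  have kK: "k \<in> Kcone rate t w" using Kt[OF tle, of w] by (simp add: k_def a_def x_def)
  have yk: "y t w = x + k - a *\<^sub>R \<xi> t w" by (simp add: k_def)
  have cs: "chi_star T ch t w = a + c" using csplit[OF tT] by (simp add: a_def c_def)
  have ann: "0 \<le> a" using chnn[OF tle] by (simp add: a_def)
  have cnn: "0 \<le> c" using csnn by (simp add: c_def)
  have U: "Ubd T atoms rate \<xi> t \<mu> = (\<lambda>q. - \<xi> t w + q) ` Qnode T atoms rate t \<mu>"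
    by (rule Ubd_eq[OF tle mu w])
  have Z: "Zbd T atoms rate \<xi> t \<mu> = convex hull (Ubd T atoms rate \<xi> t \<mu> \<union>
      {p + q |p q. p \<in> (\<Inter>\<nu>\<in>succ_nodes atoms t \<mu>. Zbd T atoms rate \<xi> (Suc t) \<nu>)
                 \<and> q \<in> Qnode T atoms rate t \<mu>})"
  proof -
    have "T - t = Suc (T - Suc t)" using tT by simp
    then show ?thesis by (simp add: Zbd_def Let_def)
  qed
  have succ_info: "(c > 0 \<longrightarrow> x \<in> (\<lambda>z. c *\<^sub>R z) ` Zbd T atoms rate \<xi> (Suc t) \<nu>) \<and>
        (c = 0 \<longrightarrow> x \<in> Qnode T atoms rate (Suc t) \<nu>)" if nu: "\<nu> \<in> succ_nodes atoms t \<mu>" for \<nu>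
  proof -
    have nuA: "\<nu> \<in> atoms (Suc t)" and sub: "\<nu> \<subseteq> \<mu>" using nu by (auto simp: succ_nodes_def)
    obtain w' where w': "w' \<in> \<nu>" using atom_ne[of "Suc t" \<nu>] tT nuA by auto
    have w'm: "w' \<in> \<mu>" using w' sub by auto
    have "y (Suc t) w' = x" using yad[OF tT] mu w w'm unfolding adapted_def x_def by blast
    moreover have "chi_star T ch (Suc t) w' = c" using csad[OF tT] mu w w'm unfolding adapted_def c_def by blast
    ultimately show ?thesis using IH nuA w' unfolding good_def by metis
  qed
  have zeroQ: "0 \<in> Qnode T atoms rate t \<mu>" by (rule KQ[OF tle mu w K0])
  show "(chi_star T ch t w > 0 \<longrightarrow>
              y t w \<in> (\<lambda>z. chi_star T ch t w *\<^sub>R z) ` Zbd T atoms rate \<xi> t \<mu>) \<and>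
           (chi_star T ch t w = 0 \<longrightarrow> y t w \<in> Qnode T atoms rate t \<mu>)"
  proof (cases "c > 0")
    case True
    define u where "u = inverse c *\<^sub>R x"
    have uW: "u \<in> (\<Inter>\<nu>\<in>succ_nodes atoms t \<mu>. Zbd T atoms rate \<xi> (Suc t) \<nu>)"
    proof
      fix \<nu> assume "\<nu> \<in> succ_nodes atoms t \<mu>"
      then obtain z where "z \<in> Zbd T atoms rate \<xi> (Suc t) \<nu>" "x = c *\<^sub>R z"
        using succ_info True by blast
      then show "u \<in> Zbd T atoms rate \<xi> (Suc t) \<nu>" using True by (simp add: u_def)
    qed
    define b where "b = u + inverse c *\<^sub>R k"
    have kq: "inverse c *\<^sub>R k \<in> Qnode T atoms rate t \<mu>"
      using KQ[OF tle mu w Kscale[OF kK]] cnn by simp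
    have bV: "b \<in> {p + q |p q. p \<in> (\<Inter>\<nu>\<in>succ_nodes atoms t \<mu>. Zbd T atoms rate \<xi> (Suc t) \<nu>)
                 \<and> q \<in> Qnode T atoms rate t \<mu>}" using uW kq unfolding b_def by blast
    define a0 where "a0 = - \<xi> t w + 0"
    have a0U: "a0 \<in> Ubd T atoms rate \<xi> t \<mu>" unfolding U a0_def using zeroQ by blast
    define p where "p = (a / (a + c)) *\<^sub>R a0 + (c / (a + c)) *\<^sub>R b"
    have ac: "a + c > 0" using ann True by simp
    have pZ: "p \<in> Zbd T atoms rate \<xi> t \<mu>" unfolding Z p_def
      apply (rule convexD[OF convex_convex_hull])
      using a0U bV ac ann cnn by (auto intro: hull_inc simp: add_divide_distrib[symmetric])
    have "(a + c) *\<^sub>R p = a *\<^sub>R a0 + c *\<^sub>R b"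
      using ac unfolding p_def by (simp add: scaleR_add_right)
    also have "\<dots> = y t w"
      using True unfolding yk a0_def b_def u_def by (simp add: scaleR_add_right)
    finally have "y t w = (a + c) *\<^sub>R p" by simp
    then show ?thesis using pZ cs ac by auto
  next
    case False
    then have c0: "c = 0" using cnn by simp
    have "x + k \<in> Qnode T atoms rate t \<mu>"
      by (rule glue[OF tT mu w _ kK]) (use succ_info c0 in blast)
    then have q: "x + k \<in> Qnode T atoms rate t \<mu>" .
    show ?thesis
    proof (intro conjI impI)
      assume "chi_star T ch t w > 0"
      then have ap: "a > 0" using cs c0 by simp
      have q': "inverse a *\<^sub>R (x + k) \<in> Qnode T atoms rate t \<mu>"
        using Qnode_scale[OF q] ap by simp
      have "- \<xi> t w + inverse a *\<^sub>R (x + k) \<in> Zbd T atoms rate \<xi> t \<mu>"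
        unfolding Z U using q' by (intro hull_inc) blast
      moreover have "y t w = a *\<^sub>R (- \<xi> t w + inverse a *\<^sub>R (x + k))"
        using ap unfolding yk by (simp add: algebra_simps)
      ultimately show "y t w \<in> (\<lambda>z. chi_star T ch t w *\<^sub>R z) ` Zbd T atoms rate \<xi> t \<mu>"
        using cs c0 by auto
    next
      assume "chi_star T ch t w = 0"
      then have "a = 0" using cs c0 by simp
      then show "y t w \<in> Qnode T atoms rate t \<mu>" using q unfolding yk by simp
    qed
  qed
qed

lemma all_good: "n \<le> T \<Longrightarrow> good (T - n)"
proof (induction n)
  case 0 then show ?case using base by simp
next
  case (Suc n)
  then have "good (Suc (T - Suc n))" using Suc_diff_Suc[of n T] by simp
  then show ?case using step[of "T - Suc n"] Suc.prems by simp
qed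

end

end

theorem propositionA4:
  fixes T :: nat
    and atoms :: "nat \<Rightarrow> ('w::finite) set set"
    and P :: "'w \<Rightarrow> real"
    and rate :: "nat \<Rightarrow> 'w \<Rightarrow> 'd::finite \<Rightarrow> 'd \<Rightarrow> real"
    and \<xi> y :: "nat \<Rightarrow> 'w \<Rightarrow> real^'d"
    and ch :: "nat \<Rightarrow> 'w \<Rightarrow> real"
  assumes "filtration T atoms"
    and "\<forall>w. P w > 0" and "(\<Sum>w\<in>UNIV. P w) = 1"
    and "exchange_rates T atoms rate"
    and "no_arbitrage T atoms rate"
    and "american_option T atoms \<xi>"
    and "Phi_bg T atoms rate \<xi> y ch"
  shows "\<forall>t\<le>T. \<forall>\<mu>\<in>atoms t. \<forall>w\<in>\<mu>.
           (chi_star T ch t w > 0 \<longrightarrow>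
              y t w \<in> (\<lambda>z. chi_star T ch t w *\<^sub>R z) ` Zbd T atoms rate \<xi> t \<mu>) \<and>
           (chi_star T ch t w = 0 \<longrightarrow> y t w \<in> Qnode T atoms rate t \<mu>)"
proof (intro allI impI)
  fix t assume tT: "t \<le> T"
  have g: "good T atoms rate \<xi> y ch (T - (T - t))"
    using all_good[OF assms(1) assms(4) assms(7) assms(6), of "T - t"] by simp
  have "T - (T - t) = t" using tT by simp
  with g show "\<forall>\<mu>\<in>atoms t. \<forall>w\<in>\<mu>.
           (chi_star T ch t w > 0 \<longrightarrow>
              y t w \<in> (\<lambda>z. chi_star T ch t w *\<^sub>R z) ` Zbd T atoms rate \<xi> t \<mu>) \<and>
           (chi_star T ch t w = 0 \<longrightarrow> y t w \<in> Qnode T atoms rate t \<mu>)"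
    using good_def[OF assms(1) assms(4) assms(7) assms(6)] by simp
qed

end
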